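(* For a commutative ring $R$ the following are equivalent: (i) every $R$-module has avoidance; (ii) every $R$-algebra is an avoidance ring; (iii) every ring extension of $R$ (every ring $S$ with an injective ring map $R\to S$) is an avoidance ring; (iv) every finitely generated $R$-module has avoidance.
   Context: All rings are commutative with $1\neq 0$. An $R$-module $M$ has avoidance if whenever $M=\bigcup_{k=1}^n M_k$ for finitely many $R$-submodules $M_k$, then $M=M_k$ for some $k$. An ideal $I$ of a ring has avoidance if whenever $I\subseteq\bigcup_{k=1}^n I_k$ for finitely many ideals $I_k$, then $I\subseteq I_k$ for some $k$; a ring is an avoidance ring if every ideal has avoidance. *)

theory Defs
  imports "HOL-Algebra.Module" "HOL-Algebra.Ideal" "HOL-Algebra.RingHom"
begin

definition submod :: "('a, 'c) ring_scheme \<Rightarrow> ('a, 'b) module \<Rightarrow> 'b set \<Rightarrow> bool" where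
  "submod R M N \<longleftrightarrow> additive_subgroup N M \<and>
     (\<forall>a \<in> carrier R. \<forall>x \<in> N. a \<odot>\<^bsub>M\<^esub> x \<in> N)"

definition module_avoidance :: "('a, 'c) ring_scheme \<Rightarrow> ('a, 'b) module \<Rightarrow> bool" where
  "module_avoidance R M \<longleftrightarrow>
     (\<forall>F. finite F \<and> (\<forall>N \<in> F. submod R M N) \<and> carrier M = \<Union>F \<longrightarrow> carrier M \<in> F)"

definition fin_gen_module :: "('a, 'c) ring_scheme \<Rightarrow> ('a, 'b) module \<Rightarrow> bool" where
  "fin_gen_module R M \<longleftrightarrow>
     (\<exists>G. finite G \<and> G \<subseteq> carrier M \<and>
        (\<forall>x \<in> carrier M. \<exists>c. c \<in> G \<rightarrow> carrier R \<and>
            x = (\<Oplus>\<^bsub>M\<^esub> g \<in> G. c g \<odot>\<^bsub>M\<^esub> g)))"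

definition ideal_avoidance :: "'s set \<Rightarrow> ('s, 'd) ring_scheme \<Rightarrow> bool" where
  "ideal_avoidance I S \<longleftrightarrow>
     (\<forall>F. finite F \<and> (\<forall>J \<in> F. ideal J S) \<and> I \<subseteq> \<Union>F \<longrightarrow> (\<exists>J \<in> F. I \<subseteq> J))"

definition avoidance_ring :: "('s, 'd) ring_scheme \<Rightarrow> bool" where
  "avoidance_ring S \<longleftrightarrow> (\<forall>I. ideal I S \<longrightarrow> ideal_avoidance I S)"

text \<open>The four conditions of the proposition, with the type of the modules / rings
  quantified over given as an explicit type parameter.\<close>
definition all_modules_avoid :: "('a, 'c) ring_scheme \<Rightarrow> 'b itself \<Rightarrow> bool" where
  "all_modules_avoid R (_ :: 'b itself) \<longleftrightarrow>
     (\<forall>M :: ('a, 'b) module. module R M \<longrightarrow> module_avoidance R M)"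

definition all_algebras_avoidance :: "('a, 'c) ring_scheme \<Rightarrow> 's itself \<Rightarrow> bool" where
  "all_algebras_avoidance R (_ :: 's itself) \<longleftrightarrow>
     (\<forall>S :: 's ring. \<forall>\<phi>. cring S \<and> \<one>\<^bsub>S\<^esub> \<noteq> \<zero>\<^bsub>S\<^esub> \<and> \<phi> \<in> ring_hom R S
        \<longrightarrow> avoidance_ring S)"

definition all_extensions_avoidance :: "('a, 'c) ring_scheme \<Rightarrow> 's itself \<Rightarrow> bool" where
  "all_extensions_avoidance R (_ :: 's itself) \<longleftrightarrow>
     (\<forall>S :: 's ring. \<forall>\<phi>. cring S \<and> \<one>\<^bsub>S\<^esub> \<noteq> \<zero>\<^bsub>S\<^esub> \<and> \<phi> \<in> ring_hom R S
        \<and> inj_on \<phi> (carrier R) \<longrightarrow> avoidance_ring S)"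

definition all_fg_modules_avoid :: "('a, 'c) ring_scheme \<Rightarrow> 'b itself \<Rightarrow> bool" where
  "all_fg_modules_avoid R (_ :: 'b itself) \<longleftrightarrow>
     (\<forall>M :: ('a, 'b) module. module R M \<and> fin_gen_module R M \<longrightarrow> module_avoidance R M)"

end

theory Submission
  imports Defs "HOL-Algebra.QuotRing"
begin

lemma (in cring) exists_maximalideal:
  assumes J: "ideal J R" and Jp: "\<one> \<notin> J"
  shows "\<exists>M. maximalideal M R \<and> J \<subseteq> M"
proof -
  define A where "A = {I. ideal I R \<and> J \<subseteq> I \<and> \<one> \<notin> I}"
  have "A \<noteq> {}" using J Jp A_def by auto
  moreover have "\<Union>C \<in> A" if C: "C \<noteq> {}" "subset.chain A C" for C
  proof -
    have CA: "C \<subseteq> A" and ch: "\<And>X Y. X \<in> C \<Longrightarrow> Y \<in> C \<Longrightarrow> X \<subseteq> Y \<or> Y \<subseteq> X"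
      using C(2) unfolding subset_chain_def by auto
    obtain I0 where I0: "I0 \<in> C" using C(1) by blast
    have idl: "\<And>I. I \<in> C \<Longrightarrow> ideal I R" using CA A_def by auto
    have "ideal (\<Union>C) R"
    proof (rule idealI)
      show "ring R" by (rule ring_axioms)
      show "subgroup (\<Union>C) (add_monoid R)"
      proof
        show "\<Union>C \<subseteq> carrier (add_monoid R)" using idl ideal.Icarr by fastforce
        show "\<one>\<^bsub>add_monoid R\<^esub> \<in> \<Union>C" using I0 idl[OF I0] additive_subgroup.zero_closed[OF ideal.axioms(1)] by fastforce
        fix x y assume "x \<in> \<Union>C" "y \<in> \<Union>C"
        then obtain X Y where XY: "X \<in> C" "Y \<in> C" "x \<in> X" "y \<in> Y" by blast
        have "\<ominus> x \<in> X" using additive_subgroup.a_inv_closed[OF ideal.axioms(1)[OF idl[OF XY(1)]] XY(3)] .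
        then show "inv\<^bsub>add_monoid R\<^esub> x \<in> \<Union>C"
          using XY by (auto simp: a_inv_def)
        show "x \<otimes>\<^bsub>add_monoid R\<^esub> y \<in> \<Union>C"
        proof (cases "X \<subseteq> Y")
          case True then have "x \<oplus> y \<in> Y" using additive_subgroup.a_closed[OF ideal.axioms(1)[OF idl[OF XY(2)]] _ XY(4)] XY(3) by blast
          then show ?thesis using XY by auto
        next
          case False then have "Y \<subseteq> X" using ch XY by blast
          then have "x \<oplus> y \<in> X" using additive_subgroup.a_closed[OF ideal.axioms(1)[OF idl[OF XY(1)]] XY(3)] XY(4) by blast
          then show ?thesis using XY by auto
        qed
      qed
      fix a x assume "a \<in> \<Union>C" "x \<in> carrier R"
      then obtain X where "X \<in> C" "a \<in> X" by blast
      then show "x \<otimes> a \<in> \<Union>C" "a \<otimes> x \<in> \<Union>C"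
        using idl[of X] ideal.I_l_closed ideal.I_r_closed \<open>x \<in> carrier R\<close> by fastforce+
    qed
    moreover have "J \<subseteq> \<Union>C" using I0 CA A_def by blast
    moreover have "\<one> \<notin> \<Union>C" using CA A_def by blast
    ultimately show ?thesis using A_def by blast
  qed
  ultimately obtain M where M: "M \<in> A" and mx: "\<And>X. X \<in> A \<Longrightarrow> M \<subseteq> X \<Longrightarrow> X = M"
    using subset_Zorn_nonempty[of A] by blast
  have "maximalideal M R"
  proof (rule maximalidealI)
    show "ideal M R" using M A_def by blast
    show "carrier R \<noteq> M" using M A_def by blast
    fix K assume K: "ideal K R" "M \<subseteq> K" "K \<subseteq> carrier R"
    show "K = M \<or> K = carrier R"
    proof (cases "\<one> \<in> K")
      case True then show ?thesis using K ideal.one_imp_carrier by blast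
    next
      case False then show ?thesis using K mx M A_def by blast
    qed
  qed
  then show ?thesis using M A_def by blast
qed


lemma (in cring) avoid_t:
  assumes "finite \<M>" "\<forall>m\<in>\<M>. maximalideal m R" "maximalideal M R" "M \<notin> \<M>"
  shows "\<exists>t\<in>carrier R. t \<notin> M \<and> (\<forall>m\<in>\<M>. t \<in> m)"
  using assms
proof (induction \<M> rule: finite_induct)
  case empty
  have "\<one> \<notin> M" using maximalideal.I_notcarr[OF empty(2)] ideal.one_imp_carrier maximalideal.axioms(1)[OF empty(2)] by blast
  then show ?case by auto
next
  case (insert m \<M>)
  have mm: "maximalideal m R" using insert.prems(1) by simp
  have "\<forall>m\<in>\<M>. maximalideal m R" using insert.prems(1) by simp
  moreover have "M \<notin> \<M>" using insert.prems(3) by simp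
  ultimately obtain t where t: "t \<in> carrier R" "t \<notin> M" "\<forall>m\<in>\<M>. t \<in> m"
    using insert.IH insert.prems(2) by blast
  have "\<not> m \<subseteq> M"
  proof
    assume "m \<subseteq> M"
    then have "M = m \<or> M = carrier R" using maximalideal.I_maximal[OF mm] maximalideal.axioms(1)[OF insert.prems(2)]
      ideal.Icarr[OF maximalideal.axioms(1)[OF insert.prems(2)]] by blast
    moreover have "M \<noteq> m" using insert.prems(3) by auto
    ultimately show False using maximalideal.I_notcarr[OF insert.prems(2)] by auto
  qed
  then obtain s where s: "s \<in> m" "s \<notin> M" by blast
  have sc: "s \<in> carrier R" using s ideal.Icarr[OF maximalideal.axioms(1)[OF mm]] by blast
  have pM: "primeideal M R" using maximalideal_prime[OF insert.prems(2)] .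
  have "t \<otimes> s \<notin> M" using primeideal.I_prime[OF pM t(1) sc] t s by blast
  moreover have "t \<otimes> s \<in> m" using ideal.I_l_closed[OF maximalideal.axioms(1)[OF mm] s(1) t(1)] .
  moreover have "\<forall>m'\<in>\<M>. t \<otimes> s \<in> m'"
  proof
    fix m' assume "m' \<in> \<M>"
    then have "maximalideal m' R" "t \<in> m'" using insert.prems(1) t(3) by auto
    then show "t \<otimes> s \<in> m'" using ideal.I_r_closed[OF maximalideal.axioms(1), of m' R t s] sc by blast
  qed
  ultimately show ?case using t(1) sc by auto
qed

lemma (in cring) avoid_unit:
  assumes M: "maximalideal M R" and t: "t \<in> carrier R" "t \<notin> M"
  shows "\<exists>u\<in>carrier R. \<one> \<ominus> t \<otimes> u \<in> M"
proof -
  interpret MI: maximalideal M R by fact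
  have F: "field (R Quot M)" using MI.quotient_is_field is_cring by blast
  have hom: "(+>) M \<in> ring_hom R (R Quot M)" using MI.rcos_ring_hom .
  have tc: "M +> t \<in> carrier (R Quot M)" using ring_hom_closed[OF hom t(1)] .
  have tn: "M +> t \<noteq> \<zero>\<^bsub>R Quot M\<^esub>"
  proof
    assume "M +> t = \<zero>\<^bsub>R Quot M\<^esub>"
    then have "M +> t = M" by (simp add: FactRing_def)
    then show False using MI.rcos_const_imp_mem t by blast
  qed
  have "M +> t \<in> Units (R Quot M)" using field.field_Units[OF F] tc tn by blast
  then obtain y where y: "y \<in> carrier (R Quot M)" "(M +> t) \<otimes>\<^bsub>R Quot M\<^esub> y = \<one>\<^bsub>R Quot M\<^esub>"
    unfolding Units_def by blast
  from y(1) obtain u where u: "u \<in> carrier R" "y = M +> u"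
    by (auto simp: FactRing_def A_RCOSETS_def')
  have "M +> (t \<otimes> u) = (M +> t) \<otimes>\<^bsub>R Quot M\<^esub> (M +> u)"
    using ring_hom_mult[OF hom t(1) u(1)] .
  also have "\<dots> = \<one>\<^bsub>R Quot M\<^esub>" using y u by simp
  also have "\<dots> = M +> \<one>" using ring_hom_one[OF hom] by simp
  finally have e: "M +> (t \<otimes> u) = M +> \<one>" .
  have "\<one> \<in> M +> \<one>" using MI.a_rcos_self[OF one_closed] .
  then have "\<one> \<in> M +> (t \<otimes> u)" using e by simp
  moreover have "t \<otimes> u \<in> carrier R" using t(1) u(1) by simp
  ultimately have "\<one> \<ominus> t \<otimes> u \<in> M"
    using MI.a_rcos_module_minus[OF ring_axioms] one_closed by blast
  then show ?thesis using u by blast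
qed

lemma (in cring) avoid_inf:
  assumes M: "maximalideal M R" and inf: "infinite (carrier (R Quot M))"
    and A: "finite A" "A \<subseteq> carrier R"
  shows "\<exists>c\<in>carrier R. \<forall>a\<in>A. c \<ominus> a \<notin> M"
proof -
  interpret MI: maximalideal M R by fact
  have "carrier (R Quot M) = (+>) M ` carrier R" by (auto simp: FactRing_def A_RCOSETS_def')
  with inf have "infinite ((+>) M ` carrier R)" by simp
  then obtain X where X: "X \<in> (+>) M ` carrier R" "X \<notin> (+>) M ` A"
  proof -
    have "\<not> (+>) M ` carrier R \<subseteq> (+>) M ` A"
      using \<open>infinite ((+>) M ` carrier R)\<close> finite_subset finite_imageI[OF A(1)] by blast
    then show ?thesis using that by blast
  qed
  then obtain c where c: "c \<in> carrier R" "X = M +> c" by blast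
  have "c \<ominus> a \<notin> M" if a: "a \<in> A" for a
  proof
    assume "c \<ominus> a \<in> M"
    then have "c \<in> M +> a" using MI.a_rcos_module_minus[OF ring_axioms] a A(2) c(1) by blast
    then have "M +> a = M +> c" using MI.a_repr_independence' a A(2) by blast
    then show False using X c a by auto
  qed
  then show ?thesis using c by blast
qed

lemma (in ring) ideal_cancel:
  assumes "ideal I R" "x \<in> carrier R" "y \<in> I" "x \<oplus> y \<in> I"
  shows "x \<in> I"
proof -
  interpret I: ideal I R by fact
  have yc: "y \<in> carrier R" using assms(3) I.Icarr by blast
  have "x = (x \<oplus> y) \<ominus> y" using assms(2) yc by algebra
  moreover have "(x \<oplus> y) \<ominus> y \<in> I" using assms(3,4) by (simp add: minus_eq)
  ultimately show ?thesis by simp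
qed

lemma (in cring) avoid_main:
  assumes Cmax: "\<forall>M. maximalideal M R \<longrightarrow> infinite (carrier (R Quot M))"
  shows "finite \<M> \<Longrightarrow> \<forall>m\<in>\<M>. maximalideal m R \<Longrightarrow> finite P \<Longrightarrow>
     \<forall>(a,m)\<in>P. a \<in> carrier R \<and> m \<in> \<M> \<Longrightarrow> \<exists>r\<in>carrier R. \<forall>(a,m)\<in>P. r \<ominus> a \<notin> m"
proof (induction \<M> arbitrary: P rule: finite_induct)
  case empty
  then have "P = {}" by auto
  then show ?case by auto
next
  case (insert M \<M>)
  have MM: "maximalideal M R" using insert.prems(1) by simp
  have mx: "\<forall>m\<in>\<M>. maximalideal m R" using insert.prems(1) by simp
  define P2 where "P2 = {p \<in> P. snd p \<in> \<M>}"
  have "finite P2" using insert.prems(2) P2_def by simp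
  moreover have "\<forall>(a,m)\<in>P2. a \<in> carrier R \<and> m \<in> \<M>" using insert.prems(3) P2_def by auto
  ultimately obtain z where z: "z \<in> carrier R" "\<forall>(a,m)\<in>P2. z \<ominus> a \<notin> m"
    using insert.IH[OF mx] by blast
  obtain t where t: "t \<in> carrier R" "t \<notin> M" "\<forall>m\<in>\<M>. t \<in> m"
    using avoid_t[OF insert.hyps(1) mx MM insert.hyps(2)] by blast
  obtain u where u: "u \<in> carrier R" "\<one> \<ominus> t \<otimes> u \<in> M"
    using avoid_unit[OF MM t(1,2)] by blast
  define A where "A = fst ` {p \<in> P. snd p = M}"
  have "finite A" using insert.prems(2) A_def by simp
  moreover have "A \<subseteq> carrier R" using insert.prems(3) A_def by auto
  ultimately obtain c where c: "c \<in> carrier R" "\<forall>a\<in>A. c \<ominus> a \<notin> M"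
    using avoid_inf[OF MM] Cmax MM by blast
  define r where "r = z \<oplus> t \<otimes> (u \<otimes> (c \<ominus> z))"
  have rc: "r \<in> carrier R" using r_def z t u c by simp
  have "r \<ominus> a \<notin> m" if am: "(a, m) \<in> P" for a m
  proof
    assume ra: "r \<ominus> a \<in> m"
    have ac: "a \<in> carrier R" and mi: "m \<in> insert M \<M>" using insert.prems(3) am by auto
    show False
    proof (cases "m \<in> \<M>")
      case True
      have im: "ideal m R" using mx True maximalideal.axioms(1) by blast
      have e: "r \<ominus> a = (z \<ominus> a) \<oplus> t \<otimes> (u \<otimes> (c \<ominus> z))"
        unfolding r_def using z(1) t(1) u(1) c(1) ac by algebra
      have tm: "t \<otimes> (u \<otimes> (c \<ominus> z)) \<in> m"
        using ideal.I_r_closed[OF im, of t "u \<otimes> (c \<ominus> z)"] t(3) True u(1) c(1) z(1) by simp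
      have "z \<ominus> a \<in> m" using ideal_cancel[OF im _ tm] ra e z(1) ac by simp
      moreover have "(a, m) \<in> P2" using am True P2_def by simp
      ultimately show False using z(2) by blast
    next
      case False
      then have mM: "m = M" using mi by simp
      have im: "ideal M R" using MM maximalideal.axioms(1) by blast
      have e: "r \<ominus> a = (c \<ominus> a) \<oplus> \<ominus> ((\<one> \<ominus> t \<otimes> u) \<otimes> (c \<ominus> z))"
        unfolding r_def using z(1) t(1) u(1) c(1) ac by algebra
      have "(\<one> \<ominus> t \<otimes> u) \<otimes> (c \<ominus> z) \<in> M"
        using ideal.I_r_closed[OF im u(2), of "c \<ominus> z"] c(1) z(1) by simp
      then have tm: "\<ominus> ((\<one> \<ominus> t \<otimes> u) \<otimes> (c \<ominus> z)) \<in> M"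
        using additive_subgroup.a_inv_closed[OF ideal.axioms(1)[OF im]] by blast
      have "c \<ominus> a \<in> M" using ideal_cancel[OF im _ tm] ra e c(1) ac mM by simp
      moreover have "a \<in> A" using am mM A_def by force
      ultimately show False using c(2) by blast
    qed
  qed
  then show ?case using rc by blast
qed

lemma (in cring) Cmax_Ccos:
  assumes Cmax: "\<forall>M. maximalideal M R \<longrightarrow> infinite (carrier (R Quot M))"
    and P: "finite P" "\<forall>(a,J)\<in>P. a \<in> carrier R \<and> ideal J R \<and> \<one> \<notin> J"
  shows "\<exists>r\<in>carrier R. \<forall>(a,J)\<in>P. r \<ominus> a \<notin> J"
proof -
  define mx where "mx J = (SOME M. maximalideal M R \<and> J \<subseteq> M)" for J
  have mxp: "maximalideal (mx J) R \<and> J \<subseteq> mx J" if "ideal J R" "\<one> \<notin> J" for J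
    unfolding mx_def using someI_ex[OF exists_maximalideal[OF that]] .
  define P' where "P' = (\<lambda>(a,J). (a, mx J)) ` P"
  define \<M> where "\<M> = snd ` P'"
  have f1: "finite \<M>" and f2: "finite P'" using P(1) P'_def \<M>_def by auto
  have f3: "\<forall>m\<in>\<M>. maximalideal m R"
  proof
    fix m assume "m \<in> \<M>"
    then obtain a J where aJ: "(a,J) \<in> P" "m = mx J" unfolding \<M>_def P'_def by auto
    then have "ideal J R" "\<one> \<notin> J" using P(2) by auto
    then show "maximalideal m R" using mxp aJ(2) by blast
  qed
  have f4: "\<forall>(a,m)\<in>P'. a \<in> carrier R \<and> m \<in> \<M>"
  proof (clarify)
    fix a m assume am: "(a,m) \<in> P'"
    then have "m \<in> \<M>" unfolding \<M>_def by (metis imageI snd_conv)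
    moreover from am obtain J where "(a,J) \<in> P" unfolding P'_def by auto
    then have "a \<in> carrier R" using P(2) by auto
    ultimately show "a \<in> carrier R \<and> m \<in> \<M>" by simp
  qed
  obtain r where r: "r \<in> carrier R" "\<forall>(a,m)\<in>P'. r \<ominus> a \<notin> m"
    using avoid_main[OF Cmax f1 f3 f2 f4] by blast
  have "r \<ominus> a \<notin> J" if "(a,J) \<in> P" for a J
  proof
    assume "r \<ominus> a \<in> J"
    moreover have "J \<subseteq> mx J" using mxp P(2) that by auto
    moreover have "(a, mx J) \<in> P'" using that P'_def by force
    ultimately show False using r(2) by blast
  qed
  then show ?thesis using r(1) by blast
qed


definition Ccos :: "('a, 'c) ring_scheme \<Rightarrow> bool" where
  "Ccos R \<longleftrightarrow> (\<forall>P. finite P \<and> (\<forall>(a,J)\<in>P. a \<in> carrier R \<and> ideal J R \<and> \<one>\<^bsub>R\<^esub> \<notin> J)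
     \<longrightarrow> (\<exists>r\<in>carrier R. \<forall>(a,J)\<in>P. r \<ominus>\<^bsub>R\<^esub> a \<notin> J))"

lemma addsub_cancel:
  assumes "additive_subgroup H G" "abelian_group G" "p \<in> carrier G" "q \<in> H" "p \<oplus>\<^bsub>G\<^esub> q \<in> H"
  shows "p \<in> H"
proof -
  interpret H: additive_subgroup H G by fact
  interpret G: abelian_group G by fact
  have qc: "q \<in> carrier G" using assms(4) H.a_subset by blast
  have "(p \<oplus>\<^bsub>G\<^esub> q) \<oplus>\<^bsub>G\<^esub> (\<ominus>\<^bsub>G\<^esub> q) = p"
    using assms(3) qc by (simp add: G.a_assoc G.r_neg)
  moreover have "(p \<oplus>\<^bsub>G\<^esub> q) \<oplus>\<^bsub>G\<^esub> (\<ominus>\<^bsub>G\<^esub> q) \<in> H" using assms(4,5) by simp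
  ultimately show ?thesis by simp
qed

lemma core:
  fixes R :: "('a, 'c) ring_scheme" (structure) and M :: "('a, 'b) module"
  assumes mod: "module R M" and Cc: "Ccos R"
  shows "finite F \<Longrightarrow> submod R M V \<Longrightarrow> \<forall>N\<in>F. submod R M N \<Longrightarrow> V \<subseteq> \<Union>F \<Longrightarrow> \<exists>N\<in>F. V \<subseteq> N"
proof (induction "card F" arbitrary: F rule: less_induct)
  case less
  interpret module R M by (rule mod)
  note fin = less.prems(1) and subV = less.prems(2) and subF = less.prems(3) and cov = less.prems(4)
  show ?case
  proof (rule ccontr)
    assume nc: "\<not> (\<exists>N\<in>F. V \<subseteq> N)"
    have red: "\<not> V \<subseteq> \<Union>(F - {N0})" if "N0 \<in> F" for N0
    proof
      assume "V \<subseteq> \<Union>(F - {N0})"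
      moreover have "card (F - {N0}) < card F" using fin that by (meson card_Diff1_less)
      ultimately have "\<exists>N\<in>F - {N0}. V \<subseteq> N" using less.hyps[of "F - {N0}"] fin subV subF by blast
      then show False using nc by blast
    qed
    have aV: "additive_subgroup V M" and sV: "\<forall>a\<in>carrier R. \<forall>x\<in>V. a \<odot>\<^bsub>M\<^esub> x \<in> V"
      using subV unfolding submod_def by auto
    have VM: "V \<subseteq> carrier M" using additive_subgroup.a_subset[OF aV] .
    have "\<zero>\<^bsub>M\<^esub> \<in> V" using additive_subgroup.zero_closed[OF aV] .
    then obtain N1 where N1: "N1 \<in> F" using cov by blast
    obtain x where x: "x \<in> V" "x \<notin> \<Union>(F - {N1})" using red[OF N1] by blast
    have xN1: "x \<in> N1" using x cov by blast
    have xc: "x \<in> carrier M" using x VM by blast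
    obtain y where y: "y \<in> V" "y \<notin> N1" using nc N1 by blast
    have yc: "y \<in> carrier M" using y VM by blast
    have aN1: "additive_subgroup N1 M" and sN1: "\<forall>a\<in>carrier R. \<forall>x\<in>N1. a \<odot>\<^bsub>M\<^esub> x \<in> N1"
      using subF N1 unfolding submod_def by auto
    define J where "J N = {r \<in> carrier R. r \<odot>\<^bsub>M\<^esub> x \<in> N}" for N
    have Jideal: "ideal (J N) R \<and> \<one> \<notin> J N" if N: "N \<in> F - {N1}" for N
    proof
      have aN: "additive_subgroup N M" and sN: "\<forall>a\<in>carrier R. \<forall>x\<in>N. a \<odot>\<^bsub>M\<^esub> x \<in> N"
        using subF N unfolding submod_def by auto
      interpret NN: additive_subgroup N M by (rule aN)
      show "\<one> \<notin> J N" using x N xc unfolding J_def by auto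
      show "ideal (J N) R"
      proof (intro idealI subgroup.intro)
        show "ring R" by (rule R.ring_axioms)
        show "J N \<subseteq> carrier (add_monoid R)" unfolding J_def by auto
        fix a b assume ab: "a \<in> J N" "b \<in> J N"
        then have "a \<in> carrier R" "b \<in> carrier R" "a \<odot>\<^bsub>M\<^esub> x \<in> N" "b \<odot>\<^bsub>M\<^esub> x \<in> N" unfolding J_def by auto
        then show "a \<otimes>\<^bsub>add_monoid R\<^esub> b \<in> J N"
          unfolding J_def using smult_l_distr xc by simp
        show "inv\<^bsub>add_monoid R\<^esub> a \<in> J N"
          using \<open>a \<in> carrier R\<close> \<open>a \<odot>\<^bsub>M\<^esub> x \<in> N\<close> unfolding J_def
          by (simp add: smult_l_minus xc flip: a_inv_def)
      next
        show "\<one>\<^bsub>add_monoid R\<^esub> \<in> J N" unfolding J_def using xc by simp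
      next
        fix a r assume ar: "a \<in> J N" "r \<in> carrier R"
        then have "a \<in> carrier R" "a \<odot>\<^bsub>M\<^esub> x \<in> N" unfolding J_def by auto
        then have "(r \<otimes> a) \<odot>\<^bsub>M\<^esub> x \<in> N" using smult_assoc1 ar(2) xc sN by simp
        then show "r \<otimes> a \<in> J N" "a \<otimes> r \<in> J N" unfolding J_def
          using ar(2) \<open>a \<in> carrier R\<close> R.m_comm by auto
      qed
    qed
    define G where "G = {N \<in> F - {N1}. \<exists>a\<in>carrier R. y \<oplus>\<^bsub>M\<^esub> a \<odot>\<^bsub>M\<^esub> x \<in> N}"
    define aa where "aa N = (SOME a. a \<in> carrier R \<and> y \<oplus>\<^bsub>M\<^esub> a \<odot>\<^bsub>M\<^esub> x \<in> N)" for N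
    have aaP: "aa N \<in> carrier R \<and> y \<oplus>\<^bsub>M\<^esub> aa N \<odot>\<^bsub>M\<^esub> x \<in> N" if "N \<in> G" for N
    proof -
      have "\<exists>a. a \<in> carrier R \<and> y \<oplus>\<^bsub>M\<^esub> a \<odot>\<^bsub>M\<^esub> x \<in> N" using that unfolding G_def by blast
      then show ?thesis unfolding aa_def by (rule someI_ex)
    qed
    define P where "P = (\<lambda>N. (aa N, J N)) ` G"
    have "finite P" using fin unfolding P_def G_def by simp
    moreover have "\<forall>(a,I)\<in>P. a \<in> carrier R \<and> ideal I R \<and> \<one> \<notin> I"
      unfolding P_def using aaP Jideal G_def by auto
    ultimately obtain r where r: "r \<in> carrier R" "\<forall>(a,I)\<in>P. r \<ominus> a \<notin> I"
      using Cc unfolding Ccos_def by blast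
    have rx: "r \<odot>\<^bsub>M\<^esub> x \<in> carrier M" using r(1) xc by simp
    have "y \<oplus>\<^bsub>M\<^esub> r \<odot>\<^bsub>M\<^esub> x \<in> V"
      using sV r(1) x(1) y(1) additive_subgroup.a_closed[OF aV] by blast
    then obtain N where N: "N \<in> F" "y \<oplus>\<^bsub>M\<^esub> r \<odot>\<^bsub>M\<^esub> x \<in> N" using cov by blast
    have "N \<noteq> N1"
    proof
      assume "N = N1"
      then have "y \<in> N1" using addsub_cancel[OF aN1 M.abelian_group_axioms yc _ ] N(2) sN1 r(1) xN1 by blast
      then show False using y by blast
    qed
    then have NG: "N \<in> G" using N r(1) G_def by blast
    have aN: "additive_subgroup N M" and sN: "\<forall>a\<in>carrier R. \<forall>x\<in>N. a \<odot>\<^bsub>M\<^esub> x \<in> N"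
      using subF N unfolding submod_def by auto
    obtain a where a: "a = aa N" "a \<in> carrier R" "y \<oplus>\<^bsub>M\<^esub> a \<odot>\<^bsub>M\<^esub> x \<in> N" using aaP[OF NG] by blast
    have ra: "r \<ominus> a \<in> carrier R" using r(1) a(2) by simp
    have "(r \<ominus> a) \<oplus> a = r" using r(1) a(2) by algebra
    then have "(r \<ominus> a) \<odot>\<^bsub>M\<^esub> x \<oplus>\<^bsub>M\<^esub> a \<odot>\<^bsub>M\<^esub> x = r \<odot>\<^bsub>M\<^esub> x"
      using smult_l_distr[OF ra a(2) xc] by simp
    then have "(r \<ominus> a) \<odot>\<^bsub>M\<^esub> x \<oplus>\<^bsub>M\<^esub> (y \<oplus>\<^bsub>M\<^esub> a \<odot>\<^bsub>M\<^esub> x) = y \<oplus>\<^bsub>M\<^esub> r \<odot>\<^bsub>M\<^esub> x"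
      using yc xc ra a(2) by (metis M.a_lcomm smult_closed)
    then have "(r \<ominus> a) \<odot>\<^bsub>M\<^esub> x \<in> N"
      using addsub_cancel[OF aN M.abelian_group_axioms _ a(3)] N(2) ra xc by simp
    then have "r \<ominus> a \<in> J (N)" unfolding J_def using ra by simp
    moreover have "(a, J N) \<in> P" unfolding P_def using NG a(1) by blast
    ultimately show False using r(2) by blast
  qed
qed


definition alg_mod :: "('s, 'd) ring_scheme \<Rightarrow> ('a \<Rightarrow> 's) \<Rightarrow> ('a, 's) module" where
  "alg_mod S \<phi> = \<lparr>carrier = carrier S, mult = mult S, one = one S, zero = zero S, add = add S,
     smult = (\<lambda>r x. \<phi> r \<otimes>\<^bsub>S\<^esub> x)\<rparr>"

lemma alg_mod_simps [simp]:
  "carrier (alg_mod S \<phi>) = carrier S" "mult (alg_mod S \<phi>) = mult S" "one (alg_mod S \<phi>) = one S"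
  "zero (alg_mod S \<phi>) = zero S" "add (alg_mod S \<phi>) = add S" "smult (alg_mod S \<phi>) = (\<lambda>r x. \<phi> r \<otimes>\<^bsub>S\<^esub> x)"
  by (simp_all add: alg_mod_def)

lemma alg_mod_module:
  assumes R: "cring R" and S: "cring S" and h: "\<phi> \<in> ring_hom R S"
  shows "module R (alg_mod S \<phi>)"
proof -
  interpret R: cring R by fact
  interpret S: cring S by fact
  have hc: "\<And>a. a \<in> carrier R \<Longrightarrow> \<phi> a \<in> carrier S" using ring_hom_closed[OF h] .
  show ?thesis
  proof (rule moduleI)
    show "cring R" by fact
    show "abelian_group (alg_mod S \<phi>)"
    proof (rule abelian_groupI)
      fix x assume "x \<in> carrier (alg_mod S \<phi>)"
      then have "x \<in> carrier S" by simp
      then show "\<exists>y\<in>carrier (alg_mod S \<phi>). y \<oplus>\<^bsub>alg_mod S \<phi>\<^esub> x = \<zero>\<^bsub>alg_mod S \<phi>\<^esub>"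
        by (intro bexI[of _ "\<ominus>\<^bsub>S\<^esub> x"]) (simp_all add: S.l_neg)
    qed (simp_all add: S.a_ac)
  next
    fix a b x assume "a \<in> carrier R" "b \<in> carrier R" "x \<in> carrier (alg_mod S \<phi>)"
    then show "(a \<oplus>\<^bsub>R\<^esub> b) \<odot>\<^bsub>alg_mod S \<phi>\<^esub> x = a \<odot>\<^bsub>alg_mod S \<phi>\<^esub> x \<oplus>\<^bsub>alg_mod S \<phi>\<^esub> b \<odot>\<^bsub>alg_mod S \<phi>\<^esub> x"
      "(a \<otimes>\<^bsub>R\<^esub> b) \<odot>\<^bsub>alg_mod S \<phi>\<^esub> x = a \<odot>\<^bsub>alg_mod S \<phi>\<^esub> (b \<odot>\<^bsub>alg_mod S \<phi>\<^esub> x)"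
      using hc by (simp_all add: ring_hom_add[OF h] ring_hom_mult[OF h] S.l_distr S.m_assoc)
  next
    fix a x y assume "a \<in> carrier R" "x \<in> carrier (alg_mod S \<phi>)" "y \<in> carrier (alg_mod S \<phi>)"
    then show "a \<odot>\<^bsub>alg_mod S \<phi>\<^esub> (x \<oplus>\<^bsub>alg_mod S \<phi>\<^esub> y) = a \<odot>\<^bsub>alg_mod S \<phi>\<^esub> x \<oplus>\<^bsub>alg_mod S \<phi>\<^esub> a \<odot>\<^bsub>alg_mod S \<phi>\<^esub> y"
      using hc by (simp add: S.r_distr)
  next
    fix a x assume "a \<in> carrier R" "x \<in> carrier (alg_mod S \<phi>)"
    then show "a \<odot>\<^bsub>alg_mod S \<phi>\<^esub> x \<in> carrier (alg_mod S \<phi>)" using hc by simp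
  next
    fix x assume "x \<in> carrier (alg_mod S \<phi>)"
    then show "\<one>\<^bsub>R\<^esub> \<odot>\<^bsub>alg_mod S \<phi>\<^esub> x = x" by (simp add: ring_hom_one[OF h])
  qed
qed

lemma addsub_alg_mod: "additive_subgroup J (alg_mod S \<phi>) \<longleftrightarrow> additive_subgroup J S"
  unfolding additive_subgroup_def subgroup_def m_inv_def by simp

lemma ideal_submod:
  assumes "ideal J S" "\<phi> \<in> ring_hom R S"
  shows "submod R (alg_mod S \<phi>) J"
  unfolding submod_def addsub_alg_mod
  using assms ideal.axioms(1) ideal.I_l_closed ring_hom_closed by fastforce

lemma ring_avoid:
  assumes R: "cring R" and Cc: "Ccos R" and S: "cring S" and h: "\<phi> \<in> ring_hom R S"
  shows "avoidance_ring S"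
  unfolding avoidance_ring_def ideal_avoidance_def
proof (intro allI impI, elim conjE)
  fix I F assume I: "ideal I S" and F: "finite F" "\<forall>J\<in>F. ideal J S" "I \<subseteq> \<Union>F"
  show "\<exists>J\<in>F. I \<subseteq> J"
    using core[OF alg_mod_module[OF R S h] Cc F(1) ideal_submod[OF I h]] F(2,3) ideal_submod[OF _ h]
    by blast
qed


definition enc :: "'a \<Rightarrow> 'a set \<Rightarrow> 'a set \<Rightarrow> 'a set list" where
  "enc r x y = [{r}, x, y]"
definition p0 :: "'a set list \<Rightarrow> 'a" where "p0 l = the_elem (l ! 0)"
definition p1 :: "'a set list \<Rightarrow> 'a set" where "p1 l = l ! 1"
definition p2 :: "'a set list \<Rightarrow> 'a set" where "p2 l = l ! 2"

lemma enc_proj [simp]: "p0 (enc r x y) = r" "p1 (enc r x y) = x" "p2 (enc r x y) = y"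
  by (simp_all add: enc_def p0_def p1_def p2_def)

lemma enc_eq [simp]: "enc r x y = enc r' x' y' \<longleftrightarrow> r = r' \<and> x = x' \<and> y = y'"
  by (auto simp: enc_def)

definition idz :: "('a, 'c) ring_scheme \<Rightarrow> 'a set ring \<Rightarrow> ('a \<Rightarrow> 'a set) \<Rightarrow> 'a set list ring" where
  "idz R Q \<rho> = \<lparr>carrier = {enc r x y | r x y. r \<in> carrier R \<and> x \<in> carrier Q \<and> y \<in> carrier Q},
     mult = (\<lambda>a b. enc (p0 a \<otimes>\<^bsub>R\<^esub> p0 b)
                  (\<rho> (p0 a) \<otimes>\<^bsub>Q\<^esub> p1 b \<oplus>\<^bsub>Q\<^esub> \<rho> (p0 b) \<otimes>\<^bsub>Q\<^esub> p1 a)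
                  (\<rho> (p0 a) \<otimes>\<^bsub>Q\<^esub> p2 b \<oplus>\<^bsub>Q\<^esub> \<rho> (p0 b) \<otimes>\<^bsub>Q\<^esub> p2 a)),
     one = enc \<one>\<^bsub>R\<^esub> \<zero>\<^bsub>Q\<^esub> \<zero>\<^bsub>Q\<^esub>, zero = enc \<zero>\<^bsub>R\<^esub> \<zero>\<^bsub>Q\<^esub> \<zero>\<^bsub>Q\<^esub>,
     add = (\<lambda>a b. enc (p0 a \<oplus>\<^bsub>R\<^esub> p0 b) (p1 a \<oplus>\<^bsub>Q\<^esub> p1 b) (p2 a \<oplus>\<^bsub>Q\<^esub> p2 b))\<rparr>"

locale idzl = R: cring R + Q: cring Q
  for R :: "('a, 'c) ring_scheme" and Q :: "'a set ring" +
  fixes \<rho> assumes h: "\<rho> \<in> ring_hom R Q"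
begin

abbreviation "S \<equiv> idz R Q \<rho>"

lemma hc [simp]: "r \<in> carrier R \<Longrightarrow> \<rho> r \<in> carrier Q" using ring_hom_closed[OF h] .
lemma hm [simp]: "r \<in> carrier R \<Longrightarrow> s \<in> carrier R \<Longrightarrow> \<rho> (r \<otimes>\<^bsub>R\<^esub> s) = \<rho> r \<otimes>\<^bsub>Q\<^esub> \<rho> s"
  using ring_hom_mult[OF h] .
lemma ha [simp]: "r \<in> carrier R \<Longrightarrow> s \<in> carrier R \<Longrightarrow> \<rho> (r \<oplus>\<^bsub>R\<^esub> s) = \<rho> r \<oplus>\<^bsub>Q\<^esub> \<rho> s"
  using ring_hom_add[OF h] .
lemma h1 [simp]: "\<rho> \<one>\<^bsub>R\<^esub> = \<one>\<^bsub>Q\<^esub>" using ring_hom_one[OF h] .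
lemma h0 [simp]: "\<rho> \<zero>\<^bsub>R\<^esub> = \<zero>\<^bsub>Q\<^esub>"
  using ring_hom_zero[OF h R.ring_axioms Q.ring_axioms] .

lemma S_carrier: "a \<in> carrier S \<longleftrightarrow> (\<exists>r x y. a = enc r x y \<and> r \<in> carrier R \<and> x \<in> carrier Q \<and> y \<in> carrier Q)"
  by (auto simp: idz_def)

lemma S_enc [simp]: "enc r x y \<in> carrier S \<longleftrightarrow> r \<in> carrier R \<and> x \<in> carrier Q \<and> y \<in> carrier Q"
  by (auto simp: idz_def)

lemma S_E:
  assumes "a \<in> carrier S"
  obtains r x y where "a = enc r x y" "r \<in> carrier R" "x \<in> carrier Q" "y \<in> carrier Q"
  using assms S_carrier by blast

lemma S_mult [simp]: "enc r x y \<otimes>\<^bsub>S\<^esub> enc s x' y' =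
   enc (r \<otimes>\<^bsub>R\<^esub> s) (\<rho> r \<otimes>\<^bsub>Q\<^esub> x' \<oplus>\<^bsub>Q\<^esub> \<rho> s \<otimes>\<^bsub>Q\<^esub> x) (\<rho> r \<otimes>\<^bsub>Q\<^esub> y' \<oplus>\<^bsub>Q\<^esub> \<rho> s \<otimes>\<^bsub>Q\<^esub> y)"
  by (simp add: idz_def)
lemma S_add [simp]: "enc r x y \<oplus>\<^bsub>S\<^esub> enc s x' y' = enc (r \<oplus>\<^bsub>R\<^esub> s) (x \<oplus>\<^bsub>Q\<^esub> x') (y \<oplus>\<^bsub>Q\<^esub> y')"
  by (simp add: idz_def)
lemma S_one [simp]: "\<one>\<^bsub>S\<^esub> = enc \<one>\<^bsub>R\<^esub> \<zero>\<^bsub>Q\<^esub> \<zero>\<^bsub>Q\<^esub>" by (simp add: idz_def)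
lemma S_zero [simp]: "\<zero>\<^bsub>S\<^esub> = enc \<zero>\<^bsub>R\<^esub> \<zero>\<^bsub>Q\<^esub> \<zero>\<^bsub>Q\<^esub>" by (simp add: idz_def)

lemma assoc_aux:
  assumes "r \<in> carrier R" "s \<in> carrier R" "t \<in> carrier R" "x \<in> carrier Q" "x' \<in> carrier Q" "x'' \<in> carrier Q"
  shows "\<rho> (r \<otimes>\<^bsub>R\<^esub> s) \<otimes>\<^bsub>Q\<^esub> x'' \<oplus>\<^bsub>Q\<^esub> \<rho> t \<otimes>\<^bsub>Q\<^esub> (\<rho> r \<otimes>\<^bsub>Q\<^esub> x' \<oplus>\<^bsub>Q\<^esub> \<rho> s \<otimes>\<^bsub>Q\<^esub> x)
       = \<rho> r \<otimes>\<^bsub>Q\<^esub> (\<rho> s \<otimes>\<^bsub>Q\<^esub> x'' \<oplus>\<^bsub>Q\<^esub> \<rho> t \<otimes>\<^bsub>Q\<^esub> x') \<oplus>\<^bsub>Q\<^esub> \<rho> (s \<otimes>\<^bsub>R\<^esub> t) \<otimes>\<^bsub>Q\<^esub> x"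
proof -
  have c: "\<rho> r \<in> carrier Q" "\<rho> s \<in> carrier Q" "\<rho> t \<in> carrier Q" using assms by simp_all
  show ?thesis unfolding hm[OF assms(1,2)] hm[OF assms(2,3)] using c assms(4-6) by algebra
qed


lemma distr_aux:
  assumes "r \<in> carrier R" "s \<in> carrier R" "t \<in> carrier R" "x \<in> carrier Q" "x' \<in> carrier Q" "x'' \<in> carrier Q"
  shows "\<rho> (r \<oplus>\<^bsub>R\<^esub> s) \<otimes>\<^bsub>Q\<^esub> x'' \<oplus>\<^bsub>Q\<^esub> \<rho> t \<otimes>\<^bsub>Q\<^esub> (x \<oplus>\<^bsub>Q\<^esub> x')
       = (\<rho> r \<otimes>\<^bsub>Q\<^esub> x'' \<oplus>\<^bsub>Q\<^esub> \<rho> t \<otimes>\<^bsub>Q\<^esub> x) \<oplus>\<^bsub>Q\<^esub> (\<rho> s \<otimes>\<^bsub>Q\<^esub> x'' \<oplus>\<^bsub>Q\<^esub> \<rho> t \<otimes>\<^bsub>Q\<^esub> x')"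
proof -
  have c: "\<rho> r \<in> carrier Q" "\<rho> s \<in> carrier Q" "\<rho> t \<in> carrier Q" using assms by simp_all
  show ?thesis unfolding ha[OF assms(1,2)] using c assms(4-6) by algebra
qed

lemma S_cring: "cring S"
proof (rule cringI)
  show "abelian_group S"
  proof (rule abelian_groupI)
    fix a b assume "a \<in> carrier S" "b \<in> carrier S"
    then show "a \<oplus>\<^bsub>S\<^esub> b \<in> carrier S" "a \<oplus>\<^bsub>S\<^esub> b = b \<oplus>\<^bsub>S\<^esub> a"
      by (auto elim!: S_E simp: R.a_comm Q.a_comm)
  next
    fix a b c assume "a \<in> carrier S" "b \<in> carrier S" "c \<in> carrier S"
    then show "a \<oplus>\<^bsub>S\<^esub> b \<oplus>\<^bsub>S\<^esub> c = a \<oplus>\<^bsub>S\<^esub> (b \<oplus>\<^bsub>S\<^esub> c)"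
      by (auto elim!: S_E simp: R.a_assoc Q.a_assoc)
  next
    fix a assume "a \<in> carrier S"
    then show "\<zero>\<^bsub>S\<^esub> \<oplus>\<^bsub>S\<^esub> a = a" by (auto elim!: S_E)
  next
    show "\<zero>\<^bsub>S\<^esub> \<in> carrier S" by simp
  next
    fix a assume "a \<in> carrier S"
    then obtain r x y where a: "a = enc r x y" "r \<in> carrier R" "x \<in> carrier Q" "y \<in> carrier Q" by (rule S_E)
    show "\<exists>b\<in>carrier S. b \<oplus>\<^bsub>S\<^esub> a = \<zero>\<^bsub>S\<^esub>"
      by (rule bexI[of _ "enc (\<ominus>\<^bsub>R\<^esub> r) (\<ominus>\<^bsub>Q\<^esub> x) (\<ominus>\<^bsub>Q\<^esub> y)"]) (simp_all add: a R.l_neg Q.l_neg)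
  qed
next
  show "comm_monoid S"
  proof (rule comm_monoidI)
    fix a b assume A: "a \<in> carrier S" "b \<in> carrier S"
    obtain r x y where a: "a = enc r x y" "r \<in> carrier R" "x \<in> carrier Q" "y \<in> carrier Q" using A(1) by (rule S_E)
    obtain s x' y' where b: "b = enc s x' y'" "s \<in> carrier R" "x' \<in> carrier Q" "y' \<in> carrier Q" using A(2) by (rule S_E)
    show "a \<otimes>\<^bsub>S\<^esub> b \<in> carrier S" using a b by simp
    show "a \<otimes>\<^bsub>S\<^esub> b = b \<otimes>\<^bsub>S\<^esub> a" using a b by (simp add: R.m_comm Q.a_comm)
  next
    show "\<one>\<^bsub>S\<^esub> \<in> carrier S" by simp
  next
    fix a assume "a \<in> carrier S"
    then obtain r x y where a: "a = enc r x y" "r \<in> carrier R" "x \<in> carrier Q" "y \<in> carrier Q" by (rule S_E)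
    have "\<one>\<^bsub>S\<^esub> \<otimes>\<^bsub>S\<^esub> a = enc (\<one>\<^bsub>R\<^esub> \<otimes>\<^bsub>R\<^esub> r) (\<rho> \<one>\<^bsub>R\<^esub> \<otimes>\<^bsub>Q\<^esub> x \<oplus>\<^bsub>Q\<^esub> \<rho> r \<otimes>\<^bsub>Q\<^esub> \<zero>\<^bsub>Q\<^esub>) (\<rho> \<one>\<^bsub>R\<^esub> \<otimes>\<^bsub>Q\<^esub> y \<oplus>\<^bsub>Q\<^esub> \<rho> r \<otimes>\<^bsub>Q\<^esub> \<zero>\<^bsub>Q\<^esub>)"
      by (simp only: a(1) S_one S_mult)
    also have "\<dots> = a" using a by (simp add: Q.r_null)
    finally show "\<one>\<^bsub>S\<^esub> \<otimes>\<^bsub>S\<^esub> a = a" .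
  next
    fix a b c assume A: "a \<in> carrier S" "b \<in> carrier S" "c \<in> carrier S"
    obtain r x y where a: "a = enc r x y" "r \<in> carrier R" "x \<in> carrier Q" "y \<in> carrier Q" using A(1) by (rule S_E)
    obtain s x' y' where b: "b = enc s x' y'" "s \<in> carrier R" "x' \<in> carrier Q" "y' \<in> carrier Q" using A(2) by (rule S_E)
    obtain t x'' y'' where c: "c = enc t x'' y''" "t \<in> carrier R" "x'' \<in> carrier Q" "y'' \<in> carrier Q" using A(3) by (rule S_E)
    show "a \<otimes>\<^bsub>S\<^esub> b \<otimes>\<^bsub>S\<^esub> c = a \<otimes>\<^bsub>S\<^esub> (b \<otimes>\<^bsub>S\<^esub> c)"
      using a b c by (simp add: R.m_assoc assoc_aux del: hm)
  qed
next
  fix a b c assume A: "a \<in> carrier S" "b \<in> carrier S" "c \<in> carrier S"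
  obtain r x y where a: "a = enc r x y" "r \<in> carrier R" "x \<in> carrier Q" "y \<in> carrier Q" using A(1) by (rule S_E)
  obtain s x' y' where b: "b = enc s x' y'" "s \<in> carrier R" "x' \<in> carrier Q" "y' \<in> carrier Q" using A(2) by (rule S_E)
  obtain t x'' y'' where c: "c = enc t x'' y''" "t \<in> carrier R" "x'' \<in> carrier Q" "y'' \<in> carrier Q" using A(3) by (rule S_E)
  show "(a \<oplus>\<^bsub>S\<^esub> b) \<otimes>\<^bsub>S\<^esub> c = a \<otimes>\<^bsub>S\<^esub> c \<oplus>\<^bsub>S\<^esub> b \<otimes>\<^bsub>S\<^esub> c"
    using a b c by (simp add: R.l_distr distr_aux del: ha)
qed

end

context idzl
begin

definition phi :: "'a \<Rightarrow> 'a set list" where "phi r = enc r \<zero>\<^bsub>Q\<^esub> \<zero>\<^bsub>Q\<^esub>"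

lemma phi_hom: "phi \<in> ring_hom R S"
proof (rule ring_hom_memI)
  fix x assume "x \<in> carrier R" then show "phi x \<in> carrier S" by (simp add: phi_def)
next
  fix x y assume "x \<in> carrier R" "y \<in> carrier R"
  then show "phi (x \<otimes>\<^bsub>R\<^esub> y) = phi x \<otimes>\<^bsub>S\<^esub> phi y" "phi (x \<oplus>\<^bsub>R\<^esub> y) = phi x \<oplus>\<^bsub>S\<^esub> phi y"
    by (simp_all add: phi_def Q.r_null del: hm)
next
  show "phi \<one>\<^bsub>R\<^esub> = \<one>\<^bsub>S\<^esub>" by (simp add: phi_def)
qed

lemma phi_inj: "inj_on phi (carrier R)"
  by (auto simp: phi_def inj_on_def)

lemma S_nontriv: "\<one>\<^bsub>R\<^esub> \<noteq> \<zero>\<^bsub>R\<^esub> \<Longrightarrow> \<one>\<^bsub>S\<^esub> \<noteq> \<zero>\<^bsub>S\<^esub>" by simp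

lemma S_neg: "r \<in> carrier R \<Longrightarrow> x \<in> carrier Q \<Longrightarrow> y \<in> carrier Q \<Longrightarrow>
   \<ominus>\<^bsub>S\<^esub> enc r x y = enc (\<ominus>\<^bsub>R\<^esub> r) (\<ominus>\<^bsub>Q\<^esub> x) (\<ominus>\<^bsub>Q\<^esub> y)"
  using cring.axioms(1)[OF S_cring]
  by (intro abelian_group.minus_equality[OF ring.is_abelian_group]) (simp_all add: R.l_neg Q.l_neg)

definition T :: "'a set \<Rightarrow> ('a set \<Rightarrow> 'a set \<Rightarrow> bool) \<Rightarrow> 'a set list set" where
  "T Z P = {enc r x y | r x y. r \<in> Z \<and> x \<in> carrier Q \<and> y \<in> carrier Q \<and> P x y}"

lemma T_mem [simp]: "enc r x y \<in> T Z P \<longleftrightarrow> r \<in> Z \<and> x \<in> carrier Q \<and> y \<in> carrier Q \<and> P x y"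
  by (auto simp: T_def)

lemma T_E:
  assumes "a \<in> T Z P"
  obtains r x y where "a = enc r x y" "r \<in> Z" "x \<in> carrier Q" "y \<in> carrier Q" "P x y"
  using assms unfolding T_def by blast

definition Plin :: "('a set \<Rightarrow> 'a set \<Rightarrow> bool) \<Rightarrow> bool" where
  "Plin P \<longleftrightarrow> P \<zero>\<^bsub>Q\<^esub> \<zero>\<^bsub>Q\<^esub> \<and>
    (\<forall>x y x' y'. x \<in> carrier Q \<and> y \<in> carrier Q \<and> x' \<in> carrier Q \<and> y' \<in> carrier Q \<and> P x y \<and> P x' y'
        \<longrightarrow> P (x \<oplus>\<^bsub>Q\<^esub> x') (y \<oplus>\<^bsub>Q\<^esub> y')) \<and>
    (\<forall>x y q. x \<in> carrier Q \<and> y \<in> carrier Q \<and> q \<in> carrier Q \<and> P x y \<longrightarrow> P (q \<otimes>\<^bsub>Q\<^esub> x) (q \<otimes>\<^bsub>Q\<^esub> y))"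

lemma PlinD:
  assumes "Plin P"
  shows "P \<zero>\<^bsub>Q\<^esub> \<zero>\<^bsub>Q\<^esub>"
    and "\<And>x y x' y'. x \<in> carrier Q \<Longrightarrow> y \<in> carrier Q \<Longrightarrow> x' \<in> carrier Q \<Longrightarrow> y' \<in> carrier Q \<Longrightarrow> P x y \<Longrightarrow> P x' y'
        \<Longrightarrow> P (x \<oplus>\<^bsub>Q\<^esub> x') (y \<oplus>\<^bsub>Q\<^esub> y')"
    and "\<And>x y q. x \<in> carrier Q \<Longrightarrow> y \<in> carrier Q \<Longrightarrow> q \<in> carrier Q \<Longrightarrow> P x y \<Longrightarrow> P (q \<otimes>\<^bsub>Q\<^esub> x) (q \<otimes>\<^bsub>Q\<^esub> y)"
  using assms unfolding Plin_def by simp_all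

lemma Plin_neg:
  assumes "Plin P" "x \<in> carrier Q" "y \<in> carrier Q" "P x y"
  shows "P (\<ominus>\<^bsub>Q\<^esub> x) (\<ominus>\<^bsub>Q\<^esub> y)"
proof -
  have "P ((\<ominus>\<^bsub>Q\<^esub> \<one>\<^bsub>Q\<^esub>) \<otimes>\<^bsub>Q\<^esub> x) ((\<ominus>\<^bsub>Q\<^esub> \<one>\<^bsub>Q\<^esub>) \<otimes>\<^bsub>Q\<^esub> y)"
    using PlinD(3)[OF assms(1) assms(2,3) _ assms(4)] by simp
  moreover have "(\<ominus>\<^bsub>Q\<^esub> \<one>\<^bsub>Q\<^esub>) \<otimes>\<^bsub>Q\<^esub> x = \<ominus>\<^bsub>Q\<^esub> x" "(\<ominus>\<^bsub>Q\<^esub> \<one>\<^bsub>Q\<^esub>) \<otimes>\<^bsub>Q\<^esub> y = \<ominus>\<^bsub>Q\<^esub> y"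
    using assms(2,3) by algebra+
  ultimately show ?thesis by simp
qed

lemma T_addsub:
  assumes Z: "additive_subgroup Z R" and P: "Plin P"
  shows "additive_subgroup (T Z P) S"
proof -
  interpret Z: additive_subgroup Z R by fact
  have PP: "P \<zero>\<^bsub>Q\<^esub> \<zero>\<^bsub>Q\<^esub>"
    "\<And>x y x' y'. x \<in> carrier Q \<Longrightarrow> y \<in> carrier Q \<Longrightarrow> x' \<in> carrier Q \<Longrightarrow> y' \<in> carrier Q \<Longrightarrow> P x y \<Longrightarrow> P x' y'
        \<Longrightarrow> P (x \<oplus>\<^bsub>Q\<^esub> x') (y \<oplus>\<^bsub>Q\<^esub> y')"
    using PlinD[OF P] by blast+
  show ?thesis
  proof (intro additive_subgroupI subgroup.intro)
    show "T Z P \<subseteq> carrier (add_monoid S)" using Z.a_subset by (auto elim!: T_E)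
    show "\<one>\<^bsub>add_monoid S\<^esub> \<in> T Z P" using PP(1) by simp
  next
    fix a b assume A: "a \<in> T Z P" "b \<in> T Z P"
    obtain r x y where a: "a = enc r x y" "r \<in> Z" "x \<in> carrier Q" "y \<in> carrier Q" "P x y" using A(1) by (rule T_E)
    obtain s x' y' where b: "b = enc s x' y'" "s \<in> Z" "x' \<in> carrier Q" "y' \<in> carrier Q" "P x' y'" using A(2) by (rule T_E)
    show "a \<otimes>\<^bsub>add_monoid S\<^esub> b \<in> T Z P" using a b PP(2) by simp
  next
    fix a assume A: "a \<in> T Z P"
    obtain r x y where a: "a = enc r x y" "r \<in> Z" "x \<in> carrier Q" "y \<in> carrier Q" "P x y" using A(1) by (rule T_E)
    have rc: "r \<in> carrier R" using a(2) Z.a_subset by blast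
    have "inv\<^bsub>add_monoid S\<^esub> a = \<ominus>\<^bsub>S\<^esub> a" by (simp add: a_inv_def)
    also have "\<dots> = enc (\<ominus>\<^bsub>R\<^esub> r) (\<ominus>\<^bsub>Q\<^esub> x) (\<ominus>\<^bsub>Q\<^esub> y)" using a rc S_neg by simp
    finally show "inv\<^bsub>add_monoid S\<^esub> a \<in> T Z P" using a Plin_neg[OF P] by simp
  qed
qed


lemma T_ideal:
  assumes P: "Plin P"
  shows "ideal (T {\<zero>\<^bsub>R\<^esub>} P) S"
proof -
  interpret S: cring S by (rule S_cring)
  have Z: "additive_subgroup {\<zero>\<^bsub>R\<^esub>} R" using ideal.axioms(1)[OF R.zeroideal] .
  have sub: "subgroup (T {\<zero>\<^bsub>R\<^esub>} P) (add_monoid S)"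
    using T_addsub[OF Z P] unfolding additive_subgroup_def .
  have cl: "s \<otimes>\<^bsub>S\<^esub> a \<in> T {\<zero>\<^bsub>R\<^esub>} P" if A: "a \<in> T {\<zero>\<^bsub>R\<^esub>} P" "s \<in> carrier S" for a s
  proof -
    obtain r x y where a: "a = enc r x y" "r \<in> {\<zero>\<^bsub>R\<^esub>}" "x \<in> carrier Q" "y \<in> carrier Q" "P x y" using A(1) by (rule T_E)
    obtain t x' y' where b: "s = enc t x' y'" "t \<in> carrier R" "x' \<in> carrier Q" "y' \<in> carrier Q" using A(2) by (rule S_E)
    have "s \<otimes>\<^bsub>S\<^esub> a = enc \<zero>\<^bsub>R\<^esub> (\<rho> t \<otimes>\<^bsub>Q\<^esub> x) (\<rho> t \<otimes>\<^bsub>Q\<^esub> y)"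
      using a b by (simp add: R.r_null)
    moreover have "P (\<rho> t \<otimes>\<^bsub>Q\<^esub> x) (\<rho> t \<otimes>\<^bsub>Q\<^esub> y)" using PlinD(3)[OF P a(3,4) _ a(5)] b(2) by simp
    ultimately show ?thesis using a b by simp
  qed
  show ?thesis
  proof (rule idealI[OF S.ring_axioms sub])
    fix a s assume "a \<in> T {\<zero>\<^bsub>R\<^esub>} P" "s \<in> carrier S"
    moreover have "a \<in> carrier S" using sub \<open>a \<in> T {\<zero>\<^bsub>R\<^esub>} P\<close> subgroup.subset by fastforce
    ultimately have "s \<otimes>\<^bsub>S\<^esub> a \<in> T {\<zero>\<^bsub>R\<^esub>} P" "a \<otimes>\<^bsub>S\<^esub> s = s \<otimes>\<^bsub>S\<^esub> a"
      using cl S.m_comm by blast+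
    then show "s \<otimes>\<^bsub>S\<^esub> a \<in> T {\<zero>\<^bsub>R\<^esub>} P" "a \<otimes>\<^bsub>S\<^esub> s \<in> T {\<zero>\<^bsub>R\<^esub>} P" by simp_all
  qed
qed

lemma T_submod:
  assumes P: "Plin P"
  shows "submod R (alg_mod S phi) (T (carrier R) P)"
proof -
  have Z: "additive_subgroup (carrier R) R" using ideal.axioms(1)[OF R.oneideal] .
  have "\<phi>' \<odot>\<^bsub>alg_mod S phi\<^esub> a \<in> T (carrier R) P" if A: "\<phi>' \<in> carrier R" "a \<in> T (carrier R) P" for \<phi>' a
  proof -
    obtain r x y where a: "a = enc r x y" "r \<in> carrier R" "x \<in> carrier Q" "y \<in> carrier Q" "P x y" using A(2) by (rule T_E)
    have "\<phi>' \<odot>\<^bsub>alg_mod S phi\<^esub> a = enc (\<phi>' \<otimes>\<^bsub>R\<^esub> r) (\<rho> \<phi>' \<otimes>\<^bsub>Q\<^esub> x) (\<rho> \<phi>' \<otimes>\<^bsub>Q\<^esub> y)"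
      using a A(1) by (simp add: phi_def Q.r_null del: hm)
    moreover have "P (\<rho> \<phi>' \<otimes>\<^bsub>Q\<^esub> x) (\<rho> \<phi>' \<otimes>\<^bsub>Q\<^esub> y)" using PlinD(3)[OF P a(3,4) _ a(5)] A(1) by simp
    ultimately show ?thesis using a A(1) by simp
  qed
  then show ?thesis unfolding submod_def addsub_alg_mod using T_addsub[OF Z P] by blast
qed

lemma Plin_true: "Plin (\<lambda>x y. True)" by (simp add: Plin_def)

lemma Plin_inf: "Plin (\<lambda>x y. x = \<zero>\<^bsub>Q\<^esub>)" by (simp add: Plin_def Q.r_null)

lemma Plin_line:
  assumes c: "c \<in> carrier Q"
  shows "Plin (\<lambda>x y. y = c \<otimes>\<^bsub>Q\<^esub> x)"
  unfolding Plin_def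
proof (intro conjI allI impI)
  show "\<zero>\<^bsub>Q\<^esub> = c \<otimes>\<^bsub>Q\<^esub> \<zero>\<^bsub>Q\<^esub>" using c by (simp add: Q.r_null)
next
  fix x y x' y' assume "x \<in> carrier Q \<and> y \<in> carrier Q \<and> x' \<in> carrier Q \<and> y' \<in> carrier Q \<and> y = c \<otimes>\<^bsub>Q\<^esub> x \<and> y' = c \<otimes>\<^bsub>Q\<^esub> x'"
  then show "y \<oplus>\<^bsub>Q\<^esub> y' = c \<otimes>\<^bsub>Q\<^esub> (x \<oplus>\<^bsub>Q\<^esub> x')" using c by (simp add: Q.r_distr)
next
  fix x y q assume H: "x \<in> carrier Q \<and> y \<in> carrier Q \<and> q \<in> carrier Q \<and> y = c \<otimes>\<^bsub>Q\<^esub> x"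
  then have "x \<in> carrier Q" "q \<in> carrier Q" by auto
  then have "q \<otimes>\<^bsub>Q\<^esub> (c \<otimes>\<^bsub>Q\<^esub> x) = c \<otimes>\<^bsub>Q\<^esub> (q \<otimes>\<^bsub>Q\<^esub> x)" using c by algebra
  then show "q \<otimes>\<^bsub>Q\<^esub> y = c \<otimes>\<^bsub>Q\<^esub> (q \<otimes>\<^bsub>Q\<^esub> x)" using H by simp
qed

end


locale idzf = idzl +
  assumes Qf: "field Q" and Qfin: "finite (carrier Q)"
    and surj: "\<forall>p\<in>carrier Q. \<exists>a\<in>carrier R. \<rho> a = p"
    and nt: "\<one>\<^bsub>R\<^esub> \<noteq> \<zero>\<^bsub>R\<^esub>"
begin

lemma Q10: "\<one>\<^bsub>Q\<^esub> \<noteq> \<zero>\<^bsub>Q\<^esub>" using Qf domain.one_not_zero field.axioms(1) by blast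

lemma Q_div:
  assumes x: "x \<in> carrier Q" "x \<noteq> \<zero>\<^bsub>Q\<^esub>" and y: "y \<in> carrier Q"
  shows "\<exists>c\<in>carrier Q. y = c \<otimes>\<^bsub>Q\<^esub> x"
proof -
  have u: "x \<in> Units Q" using field.field_Units[OF Qf] x by blast
  have ic: "inv\<^bsub>Q\<^esub> x \<in> carrier Q" using u by simp
  have "(y \<otimes>\<^bsub>Q\<^esub> inv\<^bsub>Q\<^esub> x) \<otimes>\<^bsub>Q\<^esub> x = y \<otimes>\<^bsub>Q\<^esub> (inv\<^bsub>Q\<^esub> x \<otimes>\<^bsub>Q\<^esub> x)"
    using y ic x(1) by (simp add: Q.m_assoc)
  also have "\<dots> = y" using u y by simp
  finally show ?thesis using y ic by (intro bexI[of _ "y \<otimes>\<^bsub>Q\<^esub> inv\<^bsub>Q\<^esub> x"]) auto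
qed

lemma cover:
  assumes "x \<in> carrier Q" "y \<in> carrier Q"
  shows "x = \<zero>\<^bsub>Q\<^esub> \<or> (\<exists>c\<in>carrier Q. y = c \<otimes>\<^bsub>Q\<^esub> x)"
  using Q_div assms by blast

lemma not_avoid: "\<not> avoidance_ring S"
proof
  assume av: "avoidance_ring S"
  define I0 where "I0 = T {\<zero>\<^bsub>R\<^esub>} (\<lambda>x y. True)"
  define F where "F = (\<lambda>c. T {\<zero>\<^bsub>R\<^esub>} (\<lambda>x y. y = c \<otimes>\<^bsub>Q\<^esub> x)) ` carrier Q \<union> {T {\<zero>\<^bsub>R\<^esub>} (\<lambda>x y. x = \<zero>\<^bsub>Q\<^esub>)}"
  have I0i: "ideal I0 S" unfolding I0_def by (rule T_ideal[OF Plin_true])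
  have fF: "finite F" unfolding F_def using Qfin by simp
  have iF: "\<forall>J\<in>F. ideal J S" unfolding F_def using T_ideal Plin_line Plin_inf by auto
  have cF: "I0 \<subseteq> \<Union>F"
  proof
    fix a assume "a \<in> I0"
    then obtain r x y where a: "a = enc r x y" "r \<in> {\<zero>\<^bsub>R\<^esub>}" "x \<in> carrier Q" "y \<in> carrier Q"
      unfolding I0_def by (rule T_E)
    from cover[OF a(3,4)] show "a \<in> \<Union>F"
    proof
      assume "x = \<zero>\<^bsub>Q\<^esub>"
      then show ?thesis using a unfolding F_def by auto
    next
      assume "\<exists>c\<in>carrier Q. y = c \<otimes>\<^bsub>Q\<^esub> x"
      then obtain c where "c \<in> carrier Q" "y = c \<otimes>\<^bsub>Q\<^esub> x" by blast
      then show ?thesis using a unfolding F_def by auto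
    qed
  qed
  obtain J where J: "J \<in> F" "I0 \<subseteq> J"
    using av I0i fF iF cF unfolding avoidance_ring_def ideal_avoidance_def by blast
  have e1: "enc \<zero>\<^bsub>R\<^esub> \<one>\<^bsub>Q\<^esub> \<zero>\<^bsub>Q\<^esub> \<in> I0" "enc \<zero>\<^bsub>R\<^esub> \<zero>\<^bsub>Q\<^esub> \<one>\<^bsub>Q\<^esub> \<in> I0" unfolding I0_def by simp_all
  from J(1) show False unfolding F_def
  proof
    assume "J \<in> (\<lambda>c. T {\<zero>\<^bsub>R\<^esub>} (\<lambda>x y. y = c \<otimes>\<^bsub>Q\<^esub> x)) ` carrier Q"
    then obtain c where c: "c \<in> carrier Q" "J = T {\<zero>\<^bsub>R\<^esub>} (\<lambda>x y. y = c \<otimes>\<^bsub>Q\<^esub> x)" by blast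
    then show False using e1(2) J(2) Q10 by (auto simp: Q.r_null)
  next
    assume "J \<in> {T {\<zero>\<^bsub>R\<^esub>} (\<lambda>x y. x = \<zero>\<^bsub>Q\<^esub>)}"
    then show False using e1(1) J(2) Q10 by auto
  qed
qed

abbreviation "MM \<equiv> alg_mod S phi"

lemma MM_module: "module R MM"
  using alg_mod_module[OF R.is_cring S_cring phi_hom] .

lemma not_mod_avoid: "\<not> module_avoidance R MM"
proof
  assume av: "module_avoidance R MM"
  define F where "F = (\<lambda>c. T (carrier R) (\<lambda>x y. y = c \<otimes>\<^bsub>Q\<^esub> x)) ` carrier Q \<union> {T (carrier R) (\<lambda>x y. x = \<zero>\<^bsub>Q\<^esub>)}"
  have fF: "finite F" unfolding F_def using Qfin by simp
  have iF: "\<forall>N\<in>F. submod R MM N" unfolding F_def using T_submod Plin_line Plin_inf by auto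
  have sub: "\<And>Z P. Z \<subseteq> carrier R \<Longrightarrow> T Z P \<subseteq> carrier S" by (auto elim!: T_E)
  have cF: "carrier MM = \<Union>F"
  proof
    show "carrier MM \<subseteq> \<Union>F"
    proof
      fix a assume "a \<in> carrier MM"
      then obtain r x y where a: "a = enc r x y" "r \<in> carrier R" "x \<in> carrier Q" "y \<in> carrier Q"
        by (auto elim!: S_E)
      from cover[OF a(3,4)] show "a \<in> \<Union>F"
      proof
        assume "x = \<zero>\<^bsub>Q\<^esub>"
        then show ?thesis using a unfolding F_def by auto
      next
        assume "\<exists>c\<in>carrier Q. y = c \<otimes>\<^bsub>Q\<^esub> x"
        then obtain c where "c \<in> carrier Q" "y = c \<otimes>\<^bsub>Q\<^esub> x" by blast
        then show ?thesis using a unfolding F_def by auto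
      qed
    qed
    show "\<Union>F \<subseteq> carrier MM" unfolding F_def using sub by auto
  qed
  have e1: "enc \<zero>\<^bsub>R\<^esub> \<one>\<^bsub>Q\<^esub> \<zero>\<^bsub>Q\<^esub> \<in> carrier MM" "enc \<zero>\<^bsub>R\<^esub> \<zero>\<^bsub>Q\<^esub> \<one>\<^bsub>Q\<^esub> \<in> carrier MM" by simp_all
  have "carrier MM \<in> F" using av fF iF cF unfolding module_avoidance_def by blast
  then show False unfolding F_def
  proof
    assume "carrier MM \<in> (\<lambda>c. T (carrier R) (\<lambda>x y. y = c \<otimes>\<^bsub>Q\<^esub> x)) ` carrier Q"
    then obtain c where c: "c \<in> carrier Q" "carrier MM = T (carrier R) (\<lambda>x y. y = c \<otimes>\<^bsub>Q\<^esub> x)" by blast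
    then show False using e1(2) Q10 by (auto simp: Q.r_null)
  next
    assume "carrier MM \<in> {T (carrier R) (\<lambda>x y. x = \<zero>\<^bsub>Q\<^esub>)}"
    then show False using e1(1) Q10 by auto
  qed
qed


lemma MM_fg: "fin_gen_module R MM"
proof -
  interpret MMm: module R MM by (rule MM_module)
  define e0 where "e0 = enc \<one>\<^bsub>R\<^esub> \<zero>\<^bsub>Q\<^esub> \<zero>\<^bsub>Q\<^esub>"
  define e1 where "e1 = enc \<zero>\<^bsub>R\<^esub> \<one>\<^bsub>Q\<^esub> \<zero>\<^bsub>Q\<^esub>"
  define e2 where "e2 = enc \<zero>\<^bsub>R\<^esub> \<zero>\<^bsub>Q\<^esub> \<one>\<^bsub>Q\<^esub>"
  have d: "e0 \<noteq> e1" "e0 \<noteq> e2" "e1 \<noteq> e2" using nt Q10 unfolding e0_def e1_def e2_def by auto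
  have ec: "e0 \<in> carrier MM" "e1 \<in> carrier MM" "e2 \<in> carrier MM" unfolding e0_def e1_def e2_def by simp_all
  show ?thesis unfolding fin_gen_module_def
  proof (intro exI[of _ "{e0, e1, e2}"] conjI ballI)
    show "finite {e0, e1, e2}" by simp
    show "{e0, e1, e2} \<subseteq> carrier MM" using ec by simp
    fix z assume "z \<in> carrier MM"
    then obtain r p q where z: "z = enc r p q" "r \<in> carrier R" "p \<in> carrier Q" "q \<in> carrier Q"
      by (auto elim!: S_E)
    obtain a where a: "a \<in> carrier R" "\<rho> a = p" using surj z(3) by blast
    obtain b where b: "b \<in> carrier R" "\<rho> b = q" using surj z(4) by blast
    define c where "c g = (if g = e0 then r else if g = e1 then a else b)" for g
    have cR: "c \<in> {e0, e1, e2} \<rightarrow> carrier R" using z a b unfolding c_def by auto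
    have fc: "(\<lambda>g. c g \<odot>\<^bsub>MM\<^esub> g) \<in> F \<rightarrow> carrier MM" if "F \<subseteq> {e0, e1, e2}" for F
    proof (rule Pi_I)
      fix g assume "g \<in> F"
      then have g: "g \<in> {e0, e1, e2}" using that by blast
      then have "c g \<in> carrier R" "g \<in> carrier MM" using cR ec by auto
      then show "c g \<odot>\<^bsub>MM\<^esub> g \<in> carrier MM" by (rule MMm.smult_closed)
    qed
    have c0: "c e0 \<odot>\<^bsub>MM\<^esub> e0 = enc r \<zero>\<^bsub>Q\<^esub> \<zero>\<^bsub>Q\<^esub>"
      using z by (simp add: c_def e0_def phi_def Q.r_null del: hm)
    have c1: "c e1 \<odot>\<^bsub>MM\<^esub> e1 = enc \<zero>\<^bsub>R\<^esub> p \<zero>\<^bsub>Q\<^esub>"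
      using a d z by (simp add: c_def e1_def phi_def Q.r_null R.r_null del: hm)
    have c2: "c e2 \<odot>\<^bsub>MM\<^esub> e2 = enc \<zero>\<^bsub>R\<^esub> \<zero>\<^bsub>Q\<^esub> q"
      using b d z by (simp add: c_def e2_def phi_def Q.r_null R.r_null del: hm)
    define f where "f g = c g \<odot>\<^bsub>MM\<^esub> g" for g
    have f0: "f \<in> {} \<rightarrow> carrier MM" "f \<in> {e2} \<rightarrow> carrier MM" "f \<in> {e1, e2} \<rightarrow> carrier MM"
      "f e0 \<in> carrier MM" "f e1 \<in> carrier MM" "f e2 \<in> carrier MM"
      using fc[of "{}"] fc[of "{e2}"] fc[of "{e1,e2}"] fc[of "{e0,e1,e2}"] unfolding f_def by auto
    have s1: "finsum MM f {e0, e1, e2} = f e0 \<oplus>\<^bsub>MM\<^esub> finsum MM f {e1, e2}"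
      using MMm.finsum_insert[of "{e1,e2}" e0 f] d f0 by simp
    have s2: "finsum MM f {e1, e2} = f e1 \<oplus>\<^bsub>MM\<^esub> finsum MM f {e2}"
      using MMm.finsum_insert[of "{e2}" e1 f] d f0 by simp
    have s3: "finsum MM f {e2} = f e2 \<oplus>\<^bsub>MM\<^esub> finsum MM f {}"
      using MMm.finsum_insert[of "{}" e2 f] f0 by simp
    have s4: "finsum MM f {} = \<zero>\<^bsub>MM\<^esub>" by (rule MMm.finsum_empty)
    have "finsum MM f {e0, e1, e2} = enc r \<zero>\<^bsub>Q\<^esub> \<zero>\<^bsub>Q\<^esub> \<oplus>\<^bsub>S\<^esub> (enc \<zero>\<^bsub>R\<^esub> p \<zero>\<^bsub>Q\<^esub> \<oplus>\<^bsub>S\<^esub> (enc \<zero>\<^bsub>R\<^esub> \<zero>\<^bsub>Q\<^esub> q \<oplus>\<^bsub>S\<^esub> enc \<zero>\<^bsub>R\<^esub> \<zero>\<^bsub>Q\<^esub> \<zero>\<^bsub>Q\<^esub>))"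
      unfolding s1 s2 s3 s4 using c0 c1 c2 unfolding f_def by simp
    also have "\<dots> = z" using z by simp
    finally have fs: "finsum MM f {e0, e1, e2} = z" .
    show "\<exists>c. c \<in> {e0, e1, e2} \<rightarrow> carrier R \<and> z = (\<Oplus>\<^bsub>MM\<^esub> g \<in> {e0, e1, e2}. c g \<odot>\<^bsub>MM\<^esub> g)"
      by (rule exI[of _ c], rule conjI[OF cR]) (rule fs[unfolded f_def, symmetric])
  qed
qed

end


lemma cex:
  fixes R :: "'a ring"
  assumes R: "cring R" and nt: "\<one>\<^bsub>R\<^esub> \<noteq> \<zero>\<^bsub>R\<^esub>" and M: "maximalideal M R"
    and fin: "finite (carrier (R Quot M))"
  shows "\<not> all_algebras_avoidance R TYPE('a set list)"
    and "\<not> all_extensions_avoidance R TYPE('a set list)"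
    and "\<not> all_modules_avoid R TYPE('a set list)"
    and "\<not> all_fg_modules_avoid R TYPE('a set list)"
proof -
  interpret MI: maximalideal M R by fact
  have Qf: "field (R Quot M)" using MI.quotient_is_field R by blast
  have Qc: "cring (R Quot M)" using Qf field.axioms(1) domain.axioms(1) by blast
  have h: "a_r_coset R M \<in> ring_hom R (R Quot M)" by (rule MI.rcos_ring_hom)
  have surj: "\<forall>p\<in>carrier (R Quot M). \<exists>a\<in>carrier R. a_r_coset R M a = p"
    by (auto simp: FactRing_def A_RCOSETS_def')
  interpret Z: idzf R "R Quot M" "a_r_coset R M"
    by (intro idzf.intro idzl.intro idzf_axioms.intro idzl_axioms.intro R Qc h Qf fin surj nt)
  have S: "cring Z.S" "\<one>\<^bsub>Z.S\<^esub> \<noteq> \<zero>\<^bsub>Z.S\<^esub>" "Z.phi \<in> ring_hom R Z.S" "inj_on Z.phi (carrier R)"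
    using Z.S_cring Z.S_nontriv[OF nt] Z.phi_hom Z.phi_inj by auto
  show "\<not> all_algebras_avoidance R TYPE('a set list)"
    unfolding all_algebras_avoidance_def using S Z.not_avoid by blast
  show "\<not> all_extensions_avoidance R TYPE('a set list)"
    unfolding all_extensions_avoidance_def using S Z.not_avoid by blast
  show "\<not> all_modules_avoid R TYPE('a set list)"
    unfolding all_modules_avoid_def using Z.MM_module Z.not_mod_avoid by blast
  show "\<not> all_fg_modules_avoid R TYPE('a set list)"
    unfolding all_fg_modules_avoid_def using Z.MM_module Z.not_mod_avoid Z.MM_fg by blast
qed

lemma Ccos_modules:
  fixes R :: "'a ring"
  assumes Cc: "Ccos R"
  shows "all_modules_avoid R TYPE('m)"
  unfolding all_modules_avoid_def module_avoidance_def
proof (intro allI impI, elim conjE)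
  fix M :: "('a, 'm) module" and F
  assume mod: "module R M" and F: "finite F" "\<forall>N\<in>F. submod R M N" "carrier M = \<Union>F"
  interpret module R M by fact
  have "subgroup (carrier M) (add_monoid M)"
    using group.subgroup_self[OF M.a_group] by simp
  then have "submod R M (carrier M)" unfolding submod_def by (auto intro: additive_subgroupI)
  then obtain N where N: "N \<in> F" "carrier M \<subseteq> N"
    using core[OF mod Cc F(1) _ F(2)] F(3) by blast
  have "N \<subseteq> carrier M" using F(2) N(1) additive_subgroup.a_subset unfolding submod_def by blast
  then show "carrier M \<in> F" using N by (metis subset_antisym)
qed

lemma Ccos_algebras:
  fixes R :: "'a ring"
  assumes R: "cring R" and Cc: "Ccos R"
  shows "all_algebras_avoidance R TYPE('s)"
  unfolding all_algebras_avoidance_def using ring_avoid[OF R Cc] by blast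

lemma Cmax_Ccos':
  fixes R :: "'a ring"
  assumes R: "cring R" and C: "\<forall>M. maximalideal M R \<longrightarrow> infinite (carrier (R Quot M))"
  shows "Ccos R"
  unfolding Ccos_def using cring.Cmax_Ccos[OF R C] by blast

theorem proposition3p21:
  fixes R :: "'a ring"
  assumes "cring R" and "\<one>\<^bsub>R\<^esub> \<noteq> \<zero>\<^bsub>R\<^esub>"
  shows "(all_modules_avoid R TYPE('a set list) \<longrightarrow> all_algebras_avoidance R TYPE('s))
       \<and> (all_algebras_avoidance R TYPE('a set list) \<longrightarrow> all_extensions_avoidance R TYPE('t))
       \<and> (all_extensions_avoidance R TYPE('a set list) \<longrightarrow> all_fg_modules_avoid R TYPE('n))
       \<and> (all_fg_modules_avoid R TYPE('a set list) \<longrightarrow> all_modules_avoid R TYPE('m))"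
proof -
  let ?C = "\<forall>M. maximalideal M R \<longrightarrow> infinite (carrier (R Quot M))"
  have key: "?C" if "\<not> ?C \<Longrightarrow> False" using that by blast
  have cc: "Ccos R" if "?C" using Cmax_Ccos'[OF assms(1) that] .
  have ext: "all_extensions_avoidance R TYPE('t)" if "Ccos R"
    using Ccos_algebras[OF assms(1) that, where 's='t]
    unfolding all_algebras_avoidance_def all_extensions_avoidance_def by blast
  have fg: "all_fg_modules_avoid R TYPE('n)" if "Ccos R"
    using Ccos_modules[OF that, where 'm='n]
    unfolding all_modules_avoid_def all_fg_modules_avoid_def by blast
  show ?thesis
  proof (intro conjI impI)
    assume H: "all_modules_avoid R TYPE('a set list)"
    have "?C" using H cex(3)[OF assms] by blast
    then show "all_algebras_avoidance R TYPE('s)" using Ccos_algebras[OF assms(1) cc] by blast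
  next
    assume H: "all_algebras_avoidance R TYPE('a set list)"
    have "?C" using H cex(1)[OF assms] by blast
    then show "all_extensions_avoidance R TYPE('t)" using ext cc by blast
  next
    assume H: "all_extensions_avoidance R TYPE('a set list)"
    have "?C" using H cex(2)[OF assms] by blast
    then show "all_fg_modules_avoid R TYPE('n)" using fg cc by blast
  next
    assume H: "all_fg_modules_avoid R TYPE('a set list)"
    have "?C" using H cex(4)[OF assms] by blast
    then show "all_modules_avoid R TYPE('m)" using Ccos_modules cc by blast
  qed
qed

end
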